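(* Fix a single machine with nonnegative real parameters $k^A,k^B,t^A,t^B$ and a real bound $L$. For integers $a,b\ge 0$ let $f(a,b)$ be the minimum processing time for this machine to process $a$ A-jobs and $b$ B-jobs (as defined in the context). Then for every fixed integer $a\ge 0$, the set $\{b\in\mathbb{Z}_{\ge 0} : f(a,b)\le L\}$ consists of consecutive integers, i.e. if $b_1<b_2<b_3$ are nonnegative integers with $f(a,b_1)\le L$ and $f(a,b_3)\le L$, then $f(a,b_2)\le L$.
   Context: A machine processes jobs of two types, A and B, in batches. A schedule for the task-combination $(a,b)$ ($a$ A-jobs and $b$ B-jobs) is a finite sequence of batches, each batch being a nonempty group of jobs of a single type, such that any two consecutive batches in the sequence are of different types, and in total exactly $a$ A-jobs and $b$ B-jobs are processed. An A-batch of $x$ jobs takes $t^A+k^A x^2$ time units and a B-batch of $x$ jobs takes $t^B+k^B x^2$ time units; the time of a schedule is the sum of the times of its batches (the empty schedule, used for $(0,0)$, takes time $0$). $f(a,b)$ is the minimum time over all schedules for $(a,b)$. *)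

theory Defs
  imports Main "HOL.Real"
begin

datatype jobtype = A | B

type_synonym batch = "jobtype \<times> nat"

definition valid_schedule :: "batch list \<Rightarrow> bool" where
  "valid_schedule s \<longleftrightarrow>
     (\<forall>x \<in> set s. snd x > 0) \<and>
     (\<forall>i. Suc i < length s \<longrightarrow> fst (s ! i) \<noteq> fst (s ! Suc i))"

definition jobs_of :: "jobtype \<Rightarrow> batch list \<Rightarrow> nat" where
  "jobs_of T s = (\<Sum>x\<leftarrow>s. if fst x = T then snd x else 0)"

definition batch_time :: "real \<Rightarrow> real \<Rightarrow> real \<Rightarrow> real \<Rightarrow> batch \<Rightarrow> real" where
  "batch_time kA kB tA tB x =
     (case fst x of
        A \<Rightarrow> tA + kA * (real (snd x))^2
      | B \<Rightarrow> tB + kB * (real (snd x))^2)"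

definition sched_time :: "real \<Rightarrow> real \<Rightarrow> real \<Rightarrow> real \<Rightarrow> batch list \<Rightarrow> real" where
  "sched_time kA kB tA tB s = (\<Sum>x\<leftarrow>s. batch_time kA kB tA tB x)"

text \<open>Minimum processing time f(a,b) (the minimum exists: finitely many schedules, at least one).\<close>
definition fmin :: "real \<Rightarrow> real \<Rightarrow> real \<Rightarrow> real \<Rightarrow> nat \<Rightarrow> nat \<Rightarrow> real" where
  "fmin kA kB tA tB a b =
     Min {sched_time kA kB tA tB s | s. valid_schedule s \<and> jobs_of A s = a \<and> jobs_of B s = b}"

end

theory Submission
  imports Defs
begin


definition cnt :: "jobtype \<Rightarrow> batch list \<Rightarrow> nat" where
  "cnt T s = length (filter (\<lambda>x. fst x = T) s)"

lemma valid_Nil[simp]: "valid_schedule []"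
  by (simp add: valid_schedule_def)

lemma valid_Cons: "valid_schedule (x#s) \<longleftrightarrow>
   snd x > 0 \<and> valid_schedule s \<and> (s \<noteq> [] \<longrightarrow> fst x \<noteq> fst (hd s))"
proof
  assume v: "valid_schedule (x#s)"
  have "\<forall>i. Suc i < length s \<longrightarrow> fst (s ! i) \<noteq> fst (s ! Suc i)"
  proof (intro allI impI)
    fix i assume "Suc i < length s"
    then have "Suc (Suc i) < length (x#s)" by simp
    with v show "fst (s ! i) \<noteq> fst (s ! Suc i)" unfolding valid_schedule_def by fastforce
  qed
  moreover have "s \<noteq> [] \<longrightarrow> fst x \<noteq> fst (hd s)"
  proof
    assume "s \<noteq> []"
    then have "Suc 0 < length (x#s)" by simp
    with v have "fst ((x#s) ! 0) \<noteq> fst ((x#s) ! Suc 0)" unfolding valid_schedule_def by blast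
    with \<open>s \<noteq> []\<close> show "fst x \<noteq> fst (hd s)" by (simp add: hd_conv_nth)
  qed
  ultimately show "snd x > 0 \<and> valid_schedule s \<and> (s \<noteq> [] \<longrightarrow> fst x \<noteq> fst (hd s))"
    using v unfolding valid_schedule_def by auto
next
  assume h: "snd x > 0 \<and> valid_schedule s \<and> (s \<noteq> [] \<longrightarrow> fst x \<noteq> fst (hd s))"
  show "valid_schedule (x#s)" unfolding valid_schedule_def
  proof (intro conjI allI impI)
    show "\<forall>y\<in>set (x#s). 0 < snd y" using h unfolding valid_schedule_def by auto
  next
    fix i assume i: "Suc i < length (x#s)"
    show "fst ((x#s) ! i) \<noteq> fst ((x#s) ! Suc i)"
    proof (cases i)
      case 0
      then show ?thesis using h i by (auto simp: hd_conv_nth)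
    next
      case (Suc j)
      then show ?thesis using h i unfolding valid_schedule_def by auto
    qed
  qed
qed

lemma jobs_of_simps[simp]: "jobs_of T [] = 0" "jobs_of T (x#s) = (if fst x = T then snd x else 0) + jobs_of T s"
  by (simp_all add: jobs_of_def)

lemma sched_time_simps[simp]: "sched_time kA kB tA tB [] = 0"
  "sched_time kA kB tA tB (x#s) = batch_time kA kB tA tB x + sched_time kA kB tA tB s"
  by (simp_all add: sched_time_def)

lemma cnt_simps[simp]: "cnt T [] = 0" "cnt T (x#s) = (if fst x = T then 1 else 0) + cnt T s"
  by (simp_all add: cnt_def)

lemma valid_pos: "valid_schedule s \<Longrightarrow> x \<in> set s \<Longrightarrow> snd x > 0"
  by (simp add: valid_schedule_def)

lemma cnt_le_jobs: "(\<forall>x\<in>set s. snd x > 0) \<Longrightarrow> cnt T s \<le> jobs_of T s"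
  by (induction s) auto

lemma cnt_pos: "(\<forall>x\<in>set s. snd x > 0) \<Longrightarrow> jobs_of T s > 0 \<Longrightarrow> cnt T s > 0"
  by (induction s) (auto split: if_splits)

lemma cnt_alt: "valid_schedule s \<Longrightarrow> cnt A s \<le> cnt B s + 1 \<and> cnt B s \<le> cnt A s + 1 \<and>
   (s \<noteq> [] \<longrightarrow> (fst (hd s) = A \<longrightarrow> cnt B s \<le> cnt A s) \<and> (fst (hd s) = B \<longrightarrow> cnt A s \<le> cnt B s))"
proof (induction s)
  case Nil then show ?case by simp
next
  case (Cons x s)
  then have IH: "cnt A s \<le> cnt B s + 1 \<and> cnt B s \<le> cnt A s + 1 \<and>
   (s \<noteq> [] \<longrightarrow> (fst (hd s) = A \<longrightarrow> cnt B s \<le> cnt A s) \<and> (fst (hd s) = B \<longrightarrow> cnt A s \<le> cnt B s))"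
    and h: "s \<noteq> [] \<longrightarrow> fst x \<noteq> fst (hd s)" by (auto simp: valid_Cons)
  show ?case
  proof (cases "s = []")
    case True then show ?thesis by (cases "fst x") auto
  next
    case False
    then show ?thesis using IH h by (cases "fst x"; cases "fst (hd s)") auto
  qed
qed



definition lin :: "real \<Rightarrow> real \<Rightarrow> nat \<Rightarrow> nat \<Rightarrow> nat \<Rightarrow> real" where
  "lin kA tA a m p = real p * tA + kA * ((2 * real m + 1) * real a - real p * real m * (real m + 1))"

lemma sq_tangent: "(2 * real m + 1) * real x \<le> (real x)^2 + real m * (real m + 1)"
proof -
  have "0 \<le> (real x - real m) * (real x - real m - 1)"
  proof (cases "x \<le> m")
    case True then show ?thesis by (intro mult_nonpos_nonpos) auto
  next
    case False then show ?thesis by (intro mult_nonneg_nonneg) auto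
  qed
  then show ?thesis by (simp add: algebra_simps power2_eq_square)
qed

lemma lower_bound:
  assumes "kA \<ge> 0" "kB \<ge> 0" "\<forall>x\<in>set s. snd x > 0"
  shows "sched_time kA kB tA tB s \<ge> lin kA tA (jobs_of A s) m (cnt A s) + real (cnt B s) * (tB + kB)"
  using assms(3)
proof (induction s)
  case Nil then show ?case by (simp add: lin_def)
next
  case (Cons x s)
  obtain T n where x: "x = (T, n)" by (cases x)
  have n: "n \<ge> 1" using Cons.prems x by auto
  have IH: "sched_time kA kB tA tB s \<ge> lin kA tA (jobs_of A s) m (cnt A s) + real (cnt B s) * (tB + kB)"
    using Cons by auto
  show ?case
  proof (cases T)
    case A
    have "kA * ((2 * real m + 1) * real n) \<le> kA * ((real n)^2 + real m * (real m + 1))"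
      using sq_tangent assms(1) by (intro mult_left_mono) auto
    then show ?thesis using IH x A by (simp add: lin_def batch_time_def algebra_simps)
  next
    case B
    have "kB * 1 \<le> kB * (real n)^2" using n assms(2)
      by (intro mult_left_mono) (auto simp: one_le_power)
    then show ?thesis using IH x B by (simp add: lin_def batch_time_def algebra_simps)
  qed
qed

lemma shrink:
  assumes "kB \<ge> 0" "valid_schedule s" "cnt B s \<le> b'" "b' \<le> jobs_of B s"
  shows "\<exists>s'. valid_schedule s' \<and> jobs_of A s' = jobs_of A s \<and> jobs_of B s' = b' \<and>
     sched_time kA kB tA tB s' \<le> sched_time kA kB tA tB s \<and> map fst s' = map fst s"
  using assms(2-4)
proof (induction s arbitrary: b')
  case Nil then show ?case by auto
next
  case (Cons x s)
  obtain T n where x: "x = (T, n)" by (cases x)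
  have vs: "valid_schedule s" and n: "n > 0" and hd: "s \<noteq> [] \<longrightarrow> fst x \<noteq> fst (hd s)"
    using Cons.prems(1) x by (auto simp: valid_Cons)
  have pos: "\<forall>y\<in>set s. snd y > 0" using vs valid_pos by blast
  have cj: "cnt B s \<le> jobs_of B s" using cnt_le_jobs[OF pos] .
  show ?case
  proof (cases T)
    case A
    obtain s' where s': "valid_schedule s'" "jobs_of A s' = jobs_of A s" "jobs_of B s' = b'"
      "sched_time kA kB tA tB s' \<le> sched_time kA kB tA tB s" "map fst s' = map fst s"
      using Cons.IH[OF vs, of b'] Cons.prems x A by auto
    have "s' \<noteq> [] \<longleftrightarrow> s \<noteq> []" using s'(5) by auto
    moreover have "s' \<noteq> [] \<Longrightarrow> fst (hd s') = fst (hd s)" using s'(5)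
      by (cases s; cases s') auto
    ultimately have "valid_schedule (x # s')" using s'(1) n hd x by (auto simp: valid_Cons)
    then show ?thesis using s' x A by (intro exI[of _ "x # s'"]) auto
  next
    case B
    define y' where "y' = (if b' \<ge> jobs_of B s + 1 then b' - jobs_of B s else 1)"
    define b'' where "b'' = (if b' \<ge> jobs_of B s + 1 then jobs_of B s else b' - 1)"
    have jb: "jobs_of B (x#s) = n + jobs_of B s" "cnt B (x#s) = 1 + cnt B s" using x B by auto
    have p2: "cnt B s + 1 \<le> b'" "b' \<le> n + jobs_of B s" using Cons.prems(2,3) jb by simp_all
    have y'1: "y' \<ge> 1 \<and> y' \<le> n \<and> b'' + y' = b' \<and> cnt B s \<le> b'' \<and> b'' \<le> jobs_of B s"
    proof (cases "b' \<ge> jobs_of B s + 1")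
      case True then show ?thesis using p2 cj unfolding y'_def b''_def by auto
    next
      case False then show ?thesis using p2 cj n unfolding y'_def b''_def by auto
    qed
    then have y'1: "y' \<ge> 1" "y' \<le> n" "b'' + y' = b'" "cnt B s \<le> b''" "b'' \<le> jobs_of B s" by auto
    obtain s' where s': "valid_schedule s'" "jobs_of A s' = jobs_of A s" "jobs_of B s' = b''"
      "sched_time kA kB tA tB s' \<le> sched_time kA kB tA tB s" "map fst s' = map fst s"
      using Cons.IH[OF vs y'1(4,5)] by auto
    have "s' \<noteq> [] \<longleftrightarrow> s \<noteq> []" using s'(5) by auto
    moreover have "s' \<noteq> [] \<Longrightarrow> fst (hd s') = fst (hd s)" using s'(5)
      by (cases s; cases s') auto
    ultimately have v: "valid_schedule ((B, y') # s')" using s'(1) y'1 hd x B by (auto simp: valid_Cons)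
    have "kB * (real y')^2 \<le> kB * (real n)^2" using y'1 assms(1)
      by (intro mult_left_mono power_mono) auto
    then have "batch_time kA kB tA tB (B, y') \<le> batch_time kA kB tA tB x"
      using x B by (simp add: batch_time_def)
    then show ?thesis using v s' x B y'1 by (intro exI[of _ "(B, y') # s'"]) auto
  qed
qed



lemma jobs_of_append[simp]: "jobs_of T (xs @ ys) = jobs_of T xs + jobs_of T ys"
  by (induction xs) auto
lemma cnt_append[simp]: "cnt T (xs @ ys) = cnt T xs + cnt T ys"
  by (induction xs) auto
lemma sched_time_append[simp]: "sched_time kA kB tA tB (xs @ ys) = sched_time kA kB tA tB xs + sched_time kA kB tA tB ys"
  by (induction xs) auto
lemma jobs_of_replicate[simp]: "jobs_of T (replicate k x) = k * (if fst x = T then snd x else 0)"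
  by (induction k) auto
lemma sched_time_replicate[simp]: "sched_time kA kB tA tB (replicate k x) = real k * batch_time kA kB tA tB x"
  by (induction k) (auto simp: algebra_simps)

definition weaveA :: "batch list \<Rightarrow> batch list" where
  "weaveA xs = concat (map (\<lambda>y. [y, (B, 1)]) xs)"
definition weaveB :: "batch list \<Rightarrow> batch list" where
  "weaveB xs = concat (map (\<lambda>y. [(B, 1), y]) xs)"

lemma weaveA_simps[simp]: "weaveA [] = []" "weaveA (y#ys) = y # (B,1) # weaveA ys"
  by (simp_all add: weaveA_def)
lemma weaveB_simps[simp]: "weaveB [] = []" "weaveB (y#ys) = (B,1) # y # weaveB ys"
  by (simp_all add: weaveB_def)

lemma weaveA_props:
  assumes "\<forall>y\<in>set xs. fst y = A \<and> snd y > 0"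
  shows "valid_schedule (weaveA xs) \<and> (xs \<noteq> [] \<longrightarrow> fst (hd (weaveA xs)) = A) \<and>
    jobs_of A (weaveA xs) = jobs_of A xs \<and> jobs_of B (weaveA xs) = length xs \<and>
    cnt A (weaveA xs) = length xs \<and> cnt B (weaveA xs) = length xs \<and>
    sched_time kA kB tA tB (weaveA xs) = sched_time kA kB tA tB xs + real (length xs) * (tB + kB)"
  using assms
proof (induction xs)
  case Nil then show ?case by simp
next
  case (Cons y ys)
  then show ?case by (cases ys) (auto simp: valid_Cons batch_time_def algebra_simps)
qed

lemma weaveB_props:
  assumes "\<forall>y\<in>set xs. fst y = A \<and> snd y > 0"
  shows "valid_schedule (weaveB xs) \<and> (xs \<noteq> [] \<longrightarrow> fst (hd (weaveB xs)) = B) \<and>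
    jobs_of A (weaveB xs) = jobs_of A xs \<and> jobs_of B (weaveB xs) = length xs \<and>
    cnt A (weaveB xs) = length xs \<and> cnt B (weaveB xs) = length xs \<and>
    sched_time kA kB tA tB (weaveB xs) = sched_time kA kB tA tB xs + real (length xs) * (tB + kB)"
  using assms
proof (induction xs)
  case Nil then show ?case by simp
next
  case (Cons y ys)
  then show ?case by (cases ys) (auto simp: valid_Cons batch_time_def algebra_simps)
qed

definition bal :: "nat \<Rightarrow> nat \<Rightarrow> batch list" where
  "bal a p = replicate (a mod p) (A, a div p + 1) @ replicate (p - a mod p) (A, a div p)"

lemma bal_props:
  assumes "1 \<le> p" "p \<le> a"
  shows "(\<forall>y\<in>set (bal a p). fst y = A \<and> snd y > 0) \<and> length (bal a p) = p \<and>
    jobs_of A (bal a p) = a \<and> cnt A (bal a p) = p \<and>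
    sched_time kA kB tA tB (bal a p) = lin kA tA a (a div p) p"
proof -
  define m where "m = a div p"
  define r where "r = a mod p"
  have m1: "m \<ge> 1" using assms unfolding m_def by (simp add: div_le_mono div_self[symmetric] le_div_geq)
  have rp: "r < p" using assms unfolding r_def by simp
  have a_eq: "a = p * m + r" unfolding m_def r_def by simp
  have b: "bal a p = replicate r (A, m + 1) @ replicate (p - r) (A, m)"
    unfolding bal_def m_def r_def by simp
  have cA: "cnt A (replicate k x) = (if fst x = A then k else 0)" for k x
    by (induction k) auto
  have t: "sched_time kA kB tA tB (bal a p) = real r * (tA + kA * (real m + 1)^2) + real (p - r) * (tA + kA * (real m)^2)"
    unfolding b by (simp add: batch_time_def)
  have ra: "real a = real p * real m + real r" using a_eq by simp
  have rpr: "real (p - r) = real p - real r" using rp by simp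
  have "sched_time kA kB tA tB (bal a p) = lin kA tA a m p"
    unfolding t lin_def ra rpr by (simp add: algebra_simps power2_eq_square)
  moreover have "jobs_of A (bal a p) = a" unfolding b using rp a_eq by (simp add: algebra_simps)
  ultimately show ?thesis using m1 rp unfolding b m_def by (auto simp: cA)
qed

lemma upper:
  assumes "1 \<le> p" "p \<le> a" "1 \<le> q" "p \<le> q + 1" "q \<le> p + 1"
  shows "\<exists>s. valid_schedule s \<and> jobs_of A s = a \<and> jobs_of B s = q \<and> cnt A s = p \<and> cnt B s = q \<and>
    sched_time kA kB tA tB s = lin kA tA a (a div p) p + real q * (tB + kB)"
proof -
  note bp = bal_props[OF assms(1,2), of kA kB tA tB]
  have ne: "bal a p \<noteq> []" using bp assms(1) by auto
  have cases: "q = p \<or> q = p + 1 \<or> q + 1 = p" using assms by auto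
  moreover
  { assume qp: "q = p"
    note w = weaveA_props[of "bal a p" kA kB tA tB]
    have ?thesis using w bp qp by (intro exI[of _ "weaveA (bal a p)"]) auto }
  moreover
  { assume qp: "q = p + 1"
    note w = weaveA_props[of "bal a p" kA kB tA tB]
    have "valid_schedule ((B,1) # weaveA (bal a p))" using w bp ne by (auto simp: valid_Cons)
    then have ?thesis using w bp qp
      by (intro exI[of _ "(B,1) # weaveA (bal a p)"]) (auto simp: batch_time_def algebra_simps) }
  moreover
  { assume qp: "q + 1 = p"
    obtain y ys where yys: "bal a p = y # ys" using ne by (cases "bal a p") auto
    have y: "fst y = A" "snd y > 0" and ys: "\<forall>z\<in>set ys. fst z = A \<and> snd z > 0" using bp yys by auto
    note w = weaveB_props[OF ys, of kA kB tA tB]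
    have "valid_schedule (y # weaveB ys)" using w y ys by (cases ys) (auto simp: valid_Cons)
    moreover have "length ys = q" using bp yys qp by auto
    moreover have "cnt A ys = length ys" using ys unfolding cnt_def by (simp add: filter_id_conv)
    moreover have "jobs_of A (y # ys) = a" "cnt A (y # ys) = p"
      "sched_time kA kB tA tB (y # ys) = lin kA tA a (a div p) p" using bp yys by auto
    ultimately have ?thesis using w y
      by (intro exI[of _ "y # weaveB ys"]) (auto simp: algebra_simps) }
  ultimately show ?thesis by blast
qed

lemma exists_sched: "\<exists>s. valid_schedule s \<and> jobs_of A s = a \<and> jobs_of B s = b"
proof -
  define s where "s = (if a > 0 then [(A,a)] else []) @ (if b > 0 then [(B,b)] else [])"
  have "valid_schedule s" unfolding s_def by (auto simp: valid_Cons)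
  moreover have "jobs_of A s = a \<and> jobs_of B s = b" unfolding s_def by auto
  ultimately show ?thesis by blast
qed

lemma UNIV_jobtype: "(UNIV :: jobtype set) = {A, B}"
  using jobtype.exhaust by auto

lemma length_cnt: "length s = cnt A s + cnt B s"
  by (induction s) (auto, metis jobtype.exhaust)

lemma snd_le_jobs: "x \<in> set s \<Longrightarrow> snd x \<le> jobs_of (fst x) s"
  by (induction s) auto

lemma finite_scheds: "finite {s. valid_schedule s \<and> jobs_of A s = a \<and> jobs_of B s = b}"
proof (rule finite_subset)
  show "{s. valid_schedule s \<and> jobs_of A s = a \<and> jobs_of B s = b} \<subseteq>
     {s. set s \<subseteq> (UNIV \<times> {..a+b}) \<and> length s \<le> a + b}"
  proof (rule subsetI)
    fix s assume "s \<in> {s. valid_schedule s \<and> jobs_of A s = a \<and> jobs_of B s = b}"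
    then have v: "valid_schedule s" and ja: "jobs_of A s = a" and jb: "jobs_of B s = b" by auto
    have pos: "\<forall>x\<in>set s. snd x > 0" using v valid_pos by blast
    have "length s \<le> a + b" using length_cnt[of s] cnt_le_jobs[OF pos, of A] cnt_le_jobs[OF pos, of B] ja jb by simp
    moreover have "set s \<subseteq> UNIV \<times> {..a+b}"
    proof
      fix x assume x: "x \<in> set s"
      have "snd x \<le> jobs_of (fst x) s" using snd_le_jobs[OF x] .
      moreover have "jobs_of (fst x) s \<le> a + b" using ja jb by (cases "fst x") auto
      ultimately show "x \<in> UNIV \<times> {..a+b}" by (cases x) auto
    qed
    ultimately show "s \<in> {s. set s \<subseteq> UNIV \<times> {..a+b} \<and> length s \<le> a + b}" by blast
  qed
  have fu: "finite (UNIV :: jobtype set)" unfolding UNIV_jobtype by simp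
  show "finite {s :: batch list. set s \<subseteq> (UNIV \<times> {..a+b}) \<and> length s \<le> a + b}"
    by (rule finite_lists_length_le) (intro finite_SigmaI, simp_all add: fu)
qed

lemma fmin_le:
  assumes "valid_schedule s"
  shows "fmin kA kB tA tB (jobs_of A s) (jobs_of B s) \<le> sched_time kA kB tA tB s"
proof -
  let ?a = "jobs_of A s" and ?b = "jobs_of B s"
  let ?S = "{sched_time kA kB tA tB s | s. valid_schedule s \<and> jobs_of A s = ?a \<and> jobs_of B s = ?b}"
  have fin: "finite ?S" using finite_imageI[OF finite_scheds, of "sched_time kA kB tA tB" ?a ?b]
    by (simp add: image_Collect)
  have "sched_time kA kB tA tB s \<in> ?S" using assms by blast
  then show ?thesis unfolding fmin_def using Min_le[OF fin] by blast
qed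

lemma fmin_attained:
  "\<exists>s. valid_schedule s \<and> jobs_of A s = a \<and> jobs_of B s = b \<and> sched_time kA kB tA tB s = fmin kA kB tA tB a b"
proof -
  let ?S = "{sched_time kA kB tA tB s | s. valid_schedule s \<and> jobs_of A s = a \<and> jobs_of B s = b}"
  have fin: "finite ?S" using finite_imageI[OF finite_scheds, of "sched_time kA kB tA tB" a b]
    by (simp add: image_Collect)
  have ne: "?S \<noteq> {}" using exists_sched[of a b] by blast
  have "Min ?S \<in> ?S" using Min_in[OF fin ne] .
  then show ?thesis unfolding fmin_def by auto
qed



lemma secant:
  fixes h :: "nat \<Rightarrow> real"
  assumes conv: "\<And>p. 2 \<le> p \<Longrightarrow> p + 1 \<le> a \<Longrightarrow> 2 * h p \<le> h (p - 1) + h (p + 1)"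
    and j: "1 \<le> j" "j + 1 \<le> a" and x: "1 \<le> x" "x \<le> a"
  shows "h j + (real x - real j) * (h (j + 1) - h j) \<le> h x"
proof -
  have mono: "\<forall>k. i \<le> k \<longrightarrow> k + 1 \<le> a \<longrightarrow> h (i + 1) - h i \<le> h (k + 1) - h k" if i: "1 \<le> i" for i
  proof
    fix k show "i \<le> k \<longrightarrow> k + 1 \<le> a \<longrightarrow> h (i + 1) - h i \<le> h (k + 1) - h k"
    proof (induction k)
      case 0 then show ?case using i by simp
    next
      case (Suc k)
      show ?case
      proof (intro impI)
        assume a1: "i \<le> Suc k" and a2: "Suc k + 1 \<le> a"
        show "h (i + 1) - h i \<le> h (Suc k + 1) - h (Suc k)"
        proof (cases "i = Suc k")
          case True then show ?thesis by simp
        next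
          case False
          then have "i \<le> k" using a1 by simp
          then have ih: "h (i + 1) - h i \<le> h (k + 1) - h k" using Suc.IH a2 by simp
          have "2 * h (Suc k) \<le> h (Suc k - 1) + h (Suc k + 1)" using conv[of "Suc k"] a2 \<open>i \<le> k\<close> i by simp
          then show ?thesis using ih by simp
        qed
      qed
    qed
  qed
  define d where "d = h (j + 1) - h j"
  have up: "\<forall>y. j \<le> y \<longrightarrow> y \<le> a \<longrightarrow> h j + (real y - real j) * d \<le> h y"
  proof
    fix y show "j \<le> y \<longrightarrow> y \<le> a \<longrightarrow> h j + (real y - real j) * d \<le> h y"
    proof (induction y)
      case 0 then show ?case using j by simp
    next
      case (Suc y)
      show ?case
      proof (intro impI)
        assume a1: "j \<le> Suc y" and a2: "Suc y \<le> a"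
        show "h j + (real (Suc y) - real j) * d \<le> h (Suc y)"
        proof (cases "j = Suc y")
          case True then show ?thesis by simp
        next
          case False
          then have jy: "j \<le> y" using a1 by simp
          then have ih: "h j + (real y - real j) * d \<le> h y" using Suc.IH a2 by simp
          have "d \<le> h (y + 1) - h y" using mono[OF j(1)] jy a2 unfolding d_def by simp
          then show ?thesis using ih by (simp add: algebra_simps)
        qed
      qed
    qed
  qed
  have down: "\<forall>y. y + n = j \<longrightarrow> 1 \<le> y \<longrightarrow> h j + (real y - real j) * d \<le> h y" for n
  proof (induction n)
    case 0 then show ?case by simp
  next
    case (Suc n)
    show ?case
    proof (intro allI impI)
      fix y assume a1: "y + Suc n = j" and a2: "1 \<le> y"
      have ih: "h j + (real (y + 1) - real j) * d \<le> h (y + 1)" using Suc.IH[rule_format, of "y + 1"] a1 by simp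
      have "h (y + 1) - h y \<le> d" using mono[OF a2] a1 j unfolding d_def by simp
      then show "h j + (real y - real j) * d \<le> h y" using ih by (simp add: algebra_simps)
    qed
  qed
  show ?thesis
  proof (cases "j \<le> x")
    case True then show ?thesis using up x unfolding d_def by simp
  next
    case False
    then obtain n where "x + n = j" by (metis le_add_diff_inverse nat_le_linear)
    then show ?thesis using down x unfolding d_def by blast
  qed
qed

lemma choose:
  fixes h :: "nat \<Rightarrow> real" and c L :: real
  assumes conv: "\<And>p. 2 \<le> p \<Longrightarrow> p + 1 \<le> a \<Longrightarrow> 2 * h p \<le> h (p - 1) + h (p + 1)"
    and r: "1 \<le> p1" "p1 \<le> a" "1 \<le> p3" "p3 \<le> a" "p1 \<le> q1 + 1" "q1 \<le> p1 + 1"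
       "p3 \<le> q3 + 1" "q3 \<le> p3 + 1" "q1 < b2" "b2 < q3"
    and c: "c \<ge> 0" and F1: "h p1 + real q1 * c \<le> L" and F3: "h p3 + real q3 * c \<le> L"
  shows "\<exists>p. 1 \<le> p \<and> p \<le> a \<and> p \<le> b2 + 1 \<and> b2 \<le> p + 1 \<and> h p + real b2 * c \<le> L"
proof (cases "p3 \<le> b2 + 1")
  case True
  have "real b2 * c \<le> real q3 * c" using r c by (intro mult_right_mono) auto
  then show ?thesis using True r F3 by (intro exI[of _ p3]) auto
next
  case False
  define u where "u = real b2 - real q1"
  define v where "v = real q3 - real b2"
  define N where "N = real q3 - real q1"
  have u: "u > 0" and v: "v > 0" and N: "N > 0" "N = u + v" using r unfolding u_def v_def N_def by auto
  define P where "P = (v * real p1 + u * real p3) / N"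
  have NP: "N * P = v * real p1 + u * real p3" unfolding P_def using N by simp
  have Nb: "N * real b2 = v * real q1 + u * real q3" unfolding u_def v_def N_def by (simp add: algebra_simps)
  have p13: "p1 \<le> p3" using r by simp
  have "N * (P - real p1) = u * (real p3 - real p1)" using NP N by (simp add: algebra_simps)
  moreover have "u * (real p3 - real p1) \<ge> 0" using u p13 by simp
  ultimately have "0 \<le> N * (P - real p1)" by simp
  then have Pp1: "P \<ge> real p1" using N(1) by (simp add: zero_le_mult_iff)
  have e1: "v * (real p1 - real q1) \<le> v * 1" using v r by (intro mult_left_mono) auto
  have e2: "u * (real p3 - real q3) \<le> u * 1" using u r by (intro mult_left_mono) auto
  have e3: "v * (real p1 - real q1) \<ge> v * (-1)" using v r by (intro mult_left_mono) auto
  have e4: "u * (real p3 - real q3) \<ge> u * (-1)" using u r by (intro mult_left_mono) auto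
  have "N * (P - real b2) = v * (real p1 - real q1) + u * (real p3 - real q3)"
    using NP Nb by (simp add: algebra_simps)
  then have "N * (P - real b2) \<le> N * 1" "N * (P - real b2) \<ge> N * (-1)" using e1 e2 e3 e4 N by auto
  then have "P - real b2 \<le> 1" "-1 \<le> P - real b2" using N(1)
    by (simp only: mult_le_cancel_left_pos)+
  then have Pb1: "P \<le> real b2 + 1" and Pb2: "P \<ge> real b2 - 1" by linarith+
  define j where "j = nat \<lfloor>P\<rfloor>"
  have P0: "P \<ge> 0" using Pp1 by simp
  have jP: "real j \<le> P" "P < real j + 1" unfolding j_def using P0 by linarith+
  have jp1: "p1 \<le> j" using Pp1 jP by linarith
  have jp3: "j + 1 \<le> p3" using jP Pb1 False by linarith
  have jb: "b2 \<le> j + 1" using jP Pb2 by linarith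
  have jb2: "j \<le> b2 + 1" using jP Pb1 by linarith
  define d where "d = h (j + 1) - h j"
  define l where "l x = h j + (x - real j) * d" for x
  have s1: "l (real p1) \<le> h p1" unfolding l_def d_def using secant[OF conv, where j=j and x=p1] r jp1 jp3 by simp
  have s3: "l (real p3) \<le> h p3" unfolding l_def d_def using secant[OF conv, where j=j and x=p3] r jp1 jp3 by simp
  have key: "N * (l P + real b2 * c) = v * (l (real p1) + real q1 * c) + u * (l (real p3) + real q3 * c)"
  proof -
    have "N * (l P + real b2 * c) = N * h j + (N * P - N * real j) * d + (N * real b2) * c"
      unfolding l_def by (simp add: algebra_simps)
    also have "\<dots> = (u + v) * h j + (v * real p1 + u * real p3 - (u + v) * real j) * d + (v * real q1 + u * real q3) * c"
      using NP Nb N by simp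
    also have "\<dots> = v * (l (real p1) + real q1 * c) + u * (l (real p3) + real q3 * c)"
      unfolding l_def by (simp add: algebra_simps)
    finally show ?thesis .
  qed
  have "v * (l (real p1) + real q1 * c) \<le> v * L" using s1 F1 v by (intro mult_left_mono) auto
  moreover have "u * (l (real p3) + real q3 * c) \<le> u * L" using s3 F3 u by (intro mult_left_mono) auto
  ultimately have "N * (l P + real b2 * c) \<le> N * L" using key N by (simp add: algebra_simps)
  then have lP: "l P + real b2 * c \<le> L" using N by (simp add: mult_le_cancel_left_pos)
  show ?thesis
  proof (cases "h j \<le> l P")
    case True
    then show ?thesis using lP jp1 jp3 r jb jb2 by (intro exI[of _ j]) auto
  next
    case False
    then have neg: "(P - real j) * d < 0" unfolding l_def by simp
    have Pj: "P - real j \<ge> 0" using jP by simp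
    have dneg: "d < 0" using neg Pj by (metis mult_nonneg_nonneg not_le)
    have Pj2: "P > real j" using neg Pj by (cases "P = real j") auto
    have "(P - real j - 1) * d \<ge> 0" using dneg jP by (intro mult_nonpos_nonpos) auto
    then have "h (j + 1) \<le> l P" unfolding l_def d_def by (simp add: algebra_simps)
    moreover have "j \<le> b2" using Pj2 Pb1 by linarith
    ultimately show ?thesis using lP jp1 jp3 r jb by (intro exI[of _ "j + 1"]) auto
  qed
qed



lemma tangent:
  assumes "kA \<ge> 0" "1 \<le> p" "p \<le> a"
  shows "lin kA tA a m p \<le> lin kA tA a (a div p) p"
proof -
  obtain s where s: "valid_schedule s" "jobs_of A s = a" "jobs_of B s = p" "cnt A s = p" "cnt B s = p"
    "sched_time kA 0 tA 0 s = lin kA tA a (a div p) p + real p * (0 + 0)"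
    using upper[of p a p kA 0 tA 0] assms by auto
  have pos: "\<forall>x\<in>set s. snd x > 0" using s(1) valid_pos by blast
  have "sched_time kA 0 tA 0 s \<ge> lin kA tA (jobs_of A s) m (cnt A s) + real (cnt B s) * (0 + 0)"
    using lower_bound[where kB=0 and tB=0 and m=m and tA=tA, OF assms(1) _ pos] by simp
  then show ?thesis using s by simp
qed

lemma H_conv:
  assumes "kA \<ge> 0" "2 \<le> p" "p + 1 \<le> a"
  shows "2 * lin kA tA a (a div p) p \<le> lin kA tA a (a div (p - 1)) (p - 1) + lin kA tA a (a div (p + 1)) (p + 1)"
proof -
  let ?m = "a div p"
  have "lin kA tA a ?m (p - 1) \<le> lin kA tA a (a div (p - 1)) (p - 1)"
    using tangent[OF assms(1)] assms by simp
  moreover have "lin kA tA a ?m (p + 1) \<le> lin kA tA a (a div (p + 1)) (p + 1)"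
    using tangent[OF assms(1)] assms by simp
  moreover have "lin kA tA a ?m (p - 1) + lin kA tA a ?m (p + 1) = 2 * lin kA tA a ?m p"
    using assms by (simp add: lin_def of_nat_diff algebra_simps)
  ultimately show ?thesis by linarith
qed

theorem theorem1:
  fixes kA kB tA tB L :: real and a b1 b2 b3 :: nat
  assumes "kA \<ge> 0" "kB \<ge> 0" "tA \<ge> 0" "tB \<ge> 0"
    and "b1 < b2" "b2 < b3"
    and "fmin kA kB tA tB a b1 \<le> L" "fmin kA kB tA tB a b3 \<le> L"
  shows "fmin kA kB tA tB a b2 \<le> L"
proof -
  obtain s1 where s1: "valid_schedule s1" "jobs_of A s1 = a" "jobs_of B s1 = b1"
    "sched_time kA kB tA tB s1 = fmin kA kB tA tB a b1" using fmin_attained by blast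
  obtain s3 where s3: "valid_schedule s3" "jobs_of A s3 = a" "jobs_of B s3 = b3"
    "sched_time kA kB tA tB s3 = fmin kA kB tA tB a b3" using fmin_attained by blast
  have pos1: "\<forall>x\<in>set s1. snd x > 0" using s1(1) valid_pos by blast
  have pos3: "\<forall>x\<in>set s3. snd x > 0" using s3(1) valid_pos by blast
  show ?thesis
  proof (cases "cnt B s3 \<le> b2")
    case True
    obtain s' where s': "valid_schedule s'" "jobs_of A s' = a" "jobs_of B s' = b2"
      "sched_time kA kB tA tB s' \<le> sched_time kA kB tA tB s3"
      using shrink[OF assms(2) s3(1) True, of kA tA tB] s3 assms(6) by auto
    have "fmin kA kB tA tB a b2 \<le> sched_time kA kB tA tB s'"
      using fmin_le[OF s'(1), of kA kB tA tB] s' by simp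
    then show ?thesis using s' s3 assms(8) by linarith
  next
    case False
    define p1 where "p1 = cnt A s1"
    define q1 where "q1 = cnt B s1"
    define p3 where "p3 = cnt A s3"
    define q3 where "q3 = cnt B s3"
    have alt1: "p1 \<le> q1 + 1" "q1 \<le> p1 + 1" using cnt_alt[OF s1(1)] unfolding p1_def q1_def by auto
    have alt3: "p3 \<le> q3 + 1" "q3 \<le> p3 + 1" using cnt_alt[OF s3(1)] unfolding p3_def q3_def by auto
    have q1b: "q1 \<le> b1" using cnt_le_jobs[OF pos1, of B] s1 unfolding q1_def by simp
    have p1a: "p1 \<le> a" using cnt_le_jobs[OF pos1, of A] s1 unfolding p1_def by simp
    have p3a: "p3 \<le> a" using cnt_le_jobs[OF pos3, of A] s3 unfolding p3_def by simp
    have q3b: "b2 < q3" using False unfolding q3_def by simp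
    have apos: "a > 0"
    proof (rule ccontr)
      assume "\<not> a > 0"
      then have "p3 = 0" using p3a by simp
      then show False using alt3 q3b assms(5) by simp
    qed
    have p1pos: "1 \<le> p1" using cnt_pos[OF pos1, of A] s1 apos unfolding p1_def by simp
    have p3pos: "1 \<le> p3" using cnt_pos[OF pos3, of A] s3 apos unfolding p3_def by simp
    define h where "h p = lin kA tA a (a div p) p" for p
    define c where "c = tB + kB"
    have c: "c \<ge> 0" unfolding c_def using assms by simp
    have F1: "h p1 + real q1 * c \<le> L"
      using lower_bound[where tA=tA and tB=tB and m="a div p1", OF assms(1,2) pos1] s1 assms(7)
      unfolding h_def p1_def q1_def c_def by simp
    have F3: "h p3 + real q3 * c \<le> L"
      using lower_bound[where tA=tA and tB=tB and m="a div p3", OF assms(1,2) pos3] s3 assms(8)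
      unfolding h_def p3_def q3_def c_def by simp
    have conv: "\<And>p. 2 \<le> p \<Longrightarrow> p + 1 \<le> a \<Longrightarrow> 2 * h p \<le> h (p - 1) + h (p + 1)"
      unfolding h_def using H_conv[OF assms(1)] by blast
    obtain p where p: "1 \<le> p" "p \<le> a" "p \<le> b2 + 1" "b2 \<le> p + 1" "h p + real b2 * c \<le> L"
      using choose[OF conv p1pos p1a p3pos p3a alt1 alt3 _ q3b c F1 F3] q1b assms(5) by auto
    obtain s2 where s2: "valid_schedule s2" "jobs_of A s2 = a" "jobs_of B s2 = b2"
      "sched_time kA kB tA tB s2 = lin kA tA a (a div p) p + real b2 * (tB + kB)"
      using upper[of p a b2 kA kB tA tB] p assms(5) by auto
    have "fmin kA kB tA tB a b2 \<le> sched_time kA kB tA tB s2"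
      using fmin_le[OF s2(1), of kA kB tA tB] s2 by simp
    then show ?thesis using s2 p unfolding h_def c_def by simp
  qed
qed

end
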